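(* Let $X$, $Y$ be real Banach spaces, $\Omega$ a measure space, $Z:=L^2(\Omega)$, and $e:Y\to Z$ a linear continuous dense embedding. Let $f:X\to\mathbb{R}$ and $g:X\to Y$ be continuously Fréchet differentiable. Let $(x^k)$ be generated by the augmented Lagrangian algorithm described in the context, where in Step 2 the iterate $x^{k+1}$ is chosen such that $L_{\rho_k}'(x^{k+1},w^k)\to 0$ in $X^*$, and assume the penalty sequence $(\rho_k)$ is bounded. If $\bar x$ is a (strong) limit point of $(x^k)$, then $\bar x$ is a KKT point of $\min f(x)$ s.t. $g(x)\le 0$ with a multiplier in $Z$: there exists $\lambda\in Z$ with $\lambda\ge 0$ a.e. such that $f'(\bar x)+g'(\bar x)^*\lambda=0$, $g(\bar x)\le 0$, and $\langle\lambda,g(\bar x)\rangle_Z=0$.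
   Context: The order on $Y$ is induced by $Z$: $y\le 0$ means $e(y)\le 0$ a.e. For $z\in Z$, $z_+:=\max\{z,0\}$ pointwise; $\min$ in $Z$ is pointwise; $g'(x)^*$ denotes the adjoint of $e\circ g'(x):X\to Z$ with $Z\cong Z^*$; $\langle\cdot,\cdot\rangle_Z$ is the $L^2$ inner product. The augmented Lagrangian is $L_\rho(x,\lambda):=f(x)+\frac{\rho}{2}\|(g(x)+\lambda/\rho)_+\|_Z^2$, with $x$-derivative $f'(x)+g'(x)^*(\lambda+\rho g(x))_+$. Algorithm: (S.0) Choose $(x^0,\lambda^0)\in X\times Z$, $\rho_0>0$, $w^{\max}\in Z$ with $w^{\max}\ge 0$, $\gamma>1$, $\tau\in(0,1)$; $k=0$. (S.2) Choose $w^k\in Z$ with $0\le w^k\le w^{\max}$ a.e. and compute an approximate minimizer $x^{k+1}$ of $L_{\rho_k}(\cdot,w^k)$. (S.3) Set $\lambda^{k+1}:=(w^k+\rho_k g(x^{k+1}))_+$. If $k=0$ or $\|\min\{-g(x^{k+1}),w^k/\rho_k\}\|_Z\le\tau\|\min\{-g(x^k),w^{k-1}/\rho_{k-1}\}\|_Z$, set $\rho_{k+1}:=\rho_k$; else $\rho_{k+1}:=\gamma\rho_k$. (S.4) $k\leftarrow k+1$, go to (S.2). The algorithm is run without stopping. *)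

theory Defs
  imports "HOL-Analysis.Analysis"
begin

text \<open>Z = L^2(Omega) modelled concretely: square-integrable real functions on a measure space M,
  with elements identified up to a.e. equality where relevant.\<close>

definition L2 :: "'w measure \<Rightarrow> ('w \<Rightarrow> real) set" where
  "L2 M = {z. z \<in> borel_measurable M \<and> integrable M (\<lambda>\<omega>. (z \<omega>)\<^sup>2)}"

definition L2norm :: "'w measure \<Rightarrow> ('w \<Rightarrow> real) \<Rightarrow> real" where
  "L2norm M z = sqrt (\<integral>\<omega>. (z \<omega>)\<^sup>2 \<partial>M)"

definition L2inner :: "'w measure \<Rightarrow> ('w \<Rightarrow> real) \<Rightarrow> ('w \<Rightarrow> real) \<Rightarrow> real" where
  "L2inner M u v = (\<integral>\<omega>. u \<omega> * v \<omega> \<partial>M)"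

definition dense_L2_embedding :: "'w measure \<Rightarrow> ('y::real_normed_vector \<Rightarrow> ('w \<Rightarrow> real)) \<Rightarrow> bool" where
  "dense_L2_embedding M e \<longleftrightarrow>
     (\<forall>y. e y \<in> L2 M) \<and>
     (\<forall>a b y1 y2. AE \<omega> in M. e (a *\<^sub>R y1 + b *\<^sub>R y2) \<omega> = a * e y1 \<omega> + b * e y2 \<omega>) \<and>
     (\<exists>C. \<forall>y. L2norm M (e y) \<le> C * norm y) \<and>
     (\<forall>y. (AE \<omega> in M. e y \<omega> = 0) \<longrightarrow> y = 0) \<and>
     (\<forall>z\<in>L2 M. \<forall>\<epsilon>>0. \<exists>y. L2norm M (\<lambda>\<omega>. e y \<omega> - z \<omega>) < \<epsilon>)"

definition C1_Frechet :: "('a::real_normed_vector \<Rightarrow> 'b::real_normed_vector) \<Rightarrow> ('a \<Rightarrow> ('a \<Rightarrow>\<^sub>L 'b)) \<Rightarrow> bool" where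
  "C1_Frechet F F' \<longleftrightarrow> (\<forall>x. (F has_derivative blinfun_apply (F' x)) (at x)) \<and> continuous_on UNIV F'"

definition AL_deriv ::
  "'w measure \<Rightarrow> ('y::real_normed_vector \<Rightarrow> ('w \<Rightarrow> real)) \<Rightarrow> ('x::real_normed_vector \<Rightarrow> ('x \<Rightarrow>\<^sub>L real)) \<Rightarrow> ('x \<Rightarrow> 'y) \<Rightarrow> ('x \<Rightarrow> ('x \<Rightarrow>\<^sub>L 'y))
    \<Rightarrow> real \<Rightarrow> 'x \<Rightarrow> ('w \<Rightarrow> real) \<Rightarrow> ('x \<Rightarrow> real)" where
  "AL_deriv M e f' g g' \<rho> x lam =
     (\<lambda>d. blinfun_apply (f' x) d
          + L2inner M (\<lambda>\<omega>. max (lam \<omega> + \<rho> * e (g x) \<omega>) 0) (e (blinfun_apply (g' x) d)))"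

end

theory Submission
  imports Defs
begin


definition Q :: "'w measure \<Rightarrow> ('w \<Rightarrow> real) \<Rightarrow> real" where
  "Q M z = (\<integral>\<omega>. (z \<omega>)\<^sup>2 \<partial>M)"

lemma L2_meas: "u \<in> L2 M \<Longrightarrow> u \<in> borel_measurable M"
  by (simp add: L2_def)

lemma L2_sq_int: "u \<in> L2 M \<Longrightarrow> integrable M (\<lambda>\<omega>. (u \<omega>)\<^sup>2)"
  by (simp add: L2_def)

lemma Q_nonneg: "Q M u \<ge> 0"
  unfolding Q_def by (rule integral_nonneg_AE) auto

lemma L2norm_Q: "L2norm M u = sqrt (Q M u)"
  by (simp add: L2norm_def Q_def)

lemma L2norm_sq: "(L2norm M u)\<^sup>2 = Q M u"
  using Q_nonneg[of M u] by (simp add: L2norm_Q)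

lemma L2norm_nonneg: "L2norm M u \<ge> 0"
  by (simp add: L2norm_Q Q_nonneg)

lemma L2_bound:
  assumes u: "u \<in> L2 M" and v[measurable]: "v \<in> borel_measurable M"
    and le: "AE \<omega> in M. \<bar>v \<omega>\<bar> \<le> \<bar>u \<omega>\<bar>"
  shows "v \<in> L2 M" "Q M v \<le> Q M u"
proof -
  have "integrable M (\<lambda>\<omega>. (v \<omega>)\<^sup>2)"
  proof (rule Bochner_Integration.integrable_bound[OF L2_sq_int[OF u]])
    show "(\<lambda>\<omega>. (v \<omega>)\<^sup>2) \<in> borel_measurable M" by measurable
    show "AE \<omega> in M. norm ((v \<omega>)\<^sup>2) \<le> norm ((u \<omega>)\<^sup>2)"
      using le by eventually_elim (simp add: abs_le_square_iff)
  qed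
  then show "v \<in> L2 M" by (simp add: L2_def)
  show "Q M v \<le> Q M u" unfolding Q_def
    using le \<open>integrable M (\<lambda>\<omega>. (v \<omega>)\<^sup>2)\<close> L2_sq_int[OF u]
    by (intro integral_mono_AE) (auto elim!: eventually_mono simp: abs_le_square_iff)
qed

lemma L2_prod_int:
  assumes u: "u \<in> L2 M" and v: "v \<in> L2 M"
  shows "integrable M (\<lambda>\<omega>. u \<omega> * v \<omega>)"
proof (rule Bochner_Integration.integrable_bound)
  show "integrable M (\<lambda>\<omega>. (u \<omega>)\<^sup>2 + (v \<omega>)\<^sup>2)"
    using L2_sq_int[OF u] L2_sq_int[OF v] by simp
  show "(\<lambda>\<omega>. u \<omega> * v \<omega>) \<in> borel_measurable M"
    using L2_meas[OF u] L2_meas[OF v] by measurable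
  show "AE \<omega> in M. norm (u \<omega> * v \<omega>) \<le> norm ((u \<omega>)\<^sup>2 + (v \<omega>)\<^sup>2)"
  proof (intro AE_I2)
    fix \<omega>
    have "2 * \<bar>u \<omega>\<bar> * \<bar>v \<omega>\<bar> \<le> (u \<omega>)\<^sup>2 + (v \<omega>)\<^sup>2"
      using sum_squares_bound[of "\<bar>u \<omega>\<bar>" "\<bar>v \<omega>\<bar>"] by (simp add: power2_eq_square)
    moreover have "0 \<le> \<bar>u \<omega>\<bar> * \<bar>v \<omega>\<bar>" by simp
    moreover have "norm (u \<omega> * v \<omega>) = \<bar>u \<omega>\<bar> * \<bar>v \<omega>\<bar>" by (simp add: abs_mult)
    moreover have "norm ((u \<omega>)\<^sup>2 + (v \<omega>)\<^sup>2) = (u \<omega>)\<^sup>2 + (v \<omega>)\<^sup>2" by simp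
    ultimately show "norm (u \<omega> * v \<omega>) \<le> norm ((u \<omega>)\<^sup>2 + (v \<omega>)\<^sup>2)"
      by linarith
  qed
qed

lemma L2_add: "u \<in> L2 M \<Longrightarrow> v \<in> L2 M \<Longrightarrow> (\<lambda>\<omega>. u \<omega> + v \<omega>) \<in> L2 M"
proof -
  assume u: "u \<in> L2 M" and v: "v \<in> L2 M"
  have "integrable M (\<lambda>\<omega>. 2 * (u \<omega> * v \<omega>))" using L2_prod_int[OF u v] by simp
  then have "integrable M (\<lambda>\<omega>. (u \<omega>)\<^sup>2 + (v \<omega>)\<^sup>2 + 2 * (u \<omega> * v \<omega>))"
    using L2_sq_int[OF u] L2_sq_int[OF v] by simp
  moreover have "(\<lambda>\<omega>. u \<omega> + v \<omega>) \<in> borel_measurable M"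
    using L2_meas[OF u] L2_meas[OF v] by measurable
  ultimately show ?thesis by (simp add: L2_def power2_sum mult.assoc)
qed

lemma L2_cmult: "u \<in> L2 M \<Longrightarrow> (\<lambda>\<omega>. c * u \<omega>) \<in> L2 M"
  unfolding L2_def by (auto simp: power_mult_distrib)

lemma L2_uminus: "u \<in> L2 M \<Longrightarrow> (\<lambda>\<omega>. - u \<omega>) \<in> L2 M"
  unfolding L2_def by auto

lemma L2_diff: "u \<in> L2 M \<Longrightarrow> v \<in> L2 M \<Longrightarrow> (\<lambda>\<omega>. u \<omega> - v \<omega>) \<in> L2 M"
  using L2_add[of u M "\<lambda>\<omega>. - v \<omega>"] L2_uminus[of v M] by simp

lemma L2_max0: "u \<in> L2 M \<Longrightarrow> (\<lambda>\<omega>. max (u \<omega>) 0) \<in> L2 M"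
proof -
  assume u: "u \<in> L2 M"
  note [measurable] = L2_meas[OF u]
  show ?thesis by (rule L2_bound(1)[OF u]) auto
qed

lemma L2_abs: "u \<in> L2 M \<Longrightarrow> (\<lambda>\<omega>. \<bar>u \<omega>\<bar>) \<in> L2 M"
proof -
  assume u: "u \<in> L2 M"
  note [measurable] = L2_meas[OF u]
  show ?thesis by (rule L2_bound(1)[OF u]) auto
qed

lemma L2_min: "u \<in> L2 M \<Longrightarrow> v \<in> L2 M \<Longrightarrow> (\<lambda>\<omega>. min (u \<omega>) (v \<omega>)) \<in> L2 M"
proof -
  assume u: "u \<in> L2 M" and v: "v \<in> L2 M"
  note [measurable] = L2_meas[OF u] L2_meas[OF v]
  show ?thesis by (rule L2_bound(1)[OF L2_add[OF L2_abs[OF u] L2_abs[OF v]]]) auto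
qed

lemma L2_sum: "finite I \<Longrightarrow> (\<And>i. i \<in> I \<Longrightarrow> u i \<in> L2 M) \<Longrightarrow> (\<lambda>\<omega>. \<Sum>i\<in>I. u i \<omega>) \<in> L2 M"
proof (induction I rule: finite_induct)
  case empty then show ?case by (simp add: L2_def)
next
  case (insert x F) then show ?case using L2_add[of "u x" M "\<lambda>\<omega>. \<Sum>i\<in>F. u i \<omega>"] by simp
qed

lemma CS_aux:
  fixes a A B :: real
  assumes A: "A \<ge> 0" and B: "B \<ge> 0" and a: "a \<ge> 0"
    and H: "\<And>t. t > 0 \<Longrightarrow> 2 * a \<le> t * A\<^sup>2 + B\<^sup>2 / t"
  shows "a \<le> A * B"
proof (cases "A > 0 \<and> B > 0")
  case True
  have "2 * a \<le> (B/A) * A\<^sup>2 + B\<^sup>2 / (B/A)" using H[of "B/A"] True by simp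
  also have "\<dots> = 2 * (A * B)" using True by (simp add: power2_eq_square field_simps)
  finally show ?thesis by simp
next
  case False
  show ?thesis
  proof (rule ccontr)
    assume "\<not> a \<le> A * B"
    then have ap: "a > 0" using A B a by (smt (verit) mult_nonneg_nonneg)
    show False
    proof (cases "A = 0")
      case True
      have tp: "(B\<^sup>2 + 1) / a > 0" using ap by (intro divide_pos_pos) (auto intro: add_nonneg_pos)
      have "2 * a \<le> B\<^sup>2 / ((B\<^sup>2 + 1) / a)" using H[OF tp] True by simp
      also have "\<dots> = a * B\<^sup>2 / (B\<^sup>2 + 1)" by (simp add: field_simps)
      also have "\<dots> \<le> a"
      proof -
        have p: "0 < B\<^sup>2 + 1" by (simp add: add_nonneg_pos)
        have "a * B\<^sup>2 \<le> a * (B\<^sup>2 + 1)" using ap by simp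
        then show ?thesis using p by (simp add: pos_divide_le_eq)
      qed
      finally show False using ap by simp
    next
      case False
      then have "B = 0" using \<open>\<not> (A > 0 \<and> B > 0)\<close> A B by simp
      have tp: "a / (A\<^sup>2 + 1) > 0" using ap by (intro divide_pos_pos) (auto intro: add_nonneg_pos)
      have "2 * a \<le> (a / (A\<^sup>2 + 1)) * A\<^sup>2" using H[OF tp] \<open>B = 0\<close> by simp
      also have "\<dots> \<le> a"
      proof -
        have p: "0 < A\<^sup>2 + 1" by (simp add: add_nonneg_pos)
        have "a * A\<^sup>2 \<le> a * (A\<^sup>2 + 1)" using ap by simp
        then show ?thesis using p by (simp add: pos_divide_le_eq)
      qed
      finally show False using ap by simp
    qed
  qed
qed

lemma L2_CS:
  assumes u: "u \<in> L2 M" and v: "v \<in> L2 M"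
  shows "\<bar>L2inner M u v\<bar> \<le> L2norm M u * L2norm M v"
proof (rule CS_aux[OF L2norm_nonneg L2norm_nonneg abs_ge_zero])
  fix t :: real assume t: "t > 0"
  have "\<bar>L2inner M u v\<bar> \<le> (\<integral>\<omega>. \<bar>u \<omega> * v \<omega>\<bar> \<partial>M)"
    unfolding L2inner_def using integral_abs_bound[of M "\<lambda>\<omega>. u \<omega> * v \<omega>"] by simp
  then have "2 * \<bar>L2inner M u v\<bar> \<le> (\<integral>\<omega>. 2 * \<bar>u \<omega> * v \<omega>\<bar> \<partial>M)" by simp
  also have "\<dots> \<le> (\<integral>\<omega>. t * (u \<omega>)\<^sup>2 + (v \<omega>)\<^sup>2 / t \<partial>M)"
  proof (rule integral_mono)
    show "integrable M (\<lambda>\<omega>. 2 * \<bar>u \<omega> * v \<omega>\<bar>)" using L2_prod_int[OF u v] by simp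
    show "integrable M (\<lambda>\<omega>. t * (u \<omega>)\<^sup>2 + (v \<omega>)\<^sup>2 / t)"
      using L2_sq_int[OF u] L2_sq_int[OF v] by simp
    fix \<omega>
    have "0 \<le> (t * \<bar>u \<omega>\<bar> - \<bar>v \<omega>\<bar>)\<^sup>2 / t" using t by simp
    also have "\<dots> = t * (u \<omega>)\<^sup>2 + (v \<omega>)\<^sup>2 / t - 2 * \<bar>u \<omega> * v \<omega>\<bar>"
      using t by (simp add: power2_eq_square field_simps abs_mult)
    finally show "2 * \<bar>u \<omega> * v \<omega>\<bar> \<le> t * (u \<omega>)\<^sup>2 + (v \<omega>)\<^sup>2 / t" by simp
  qed
  also have "\<dots> = t * Q M u + Q M v / t"
    using L2_sq_int[OF u] L2_sq_int[OF v] by (simp add: Q_def)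
  also have "\<dots> = t * (L2norm M u)\<^sup>2 + (L2norm M v)\<^sup>2 / t" by (simp add: L2norm_sq)
  finally show "2 * \<bar>L2inner M u v\<bar> \<le> t * (L2norm M u)\<^sup>2 + (L2norm M v)\<^sup>2 / t" .
qed



lemma ae_summable_lemma:
  fixes d :: "nat \<Rightarrow> real"
  assumes "summable (\<lambda>i. 2^i * (d i)\<^sup>2)"
  shows "summable (\<lambda>i. d i)"
proof -
  have b: "norm (d i) \<le> (1/2)^i + 2^i * (d i)\<^sup>2" for i
  proof (cases "\<bar>d i\<bar> \<le> (1/2)^i")
    case True
    have "0 \<le> 2^i * (d i)\<^sup>2" by simp
    then show ?thesis using True by (simp only: real_norm_def)
  next
    case False
    then have g: "1 < 2^i * \<bar>d i\<bar>" by (simp add: power_one_over field_simps)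
    have hp: "0 < (1/2::real)^i" by simp
    then have dp: "0 < \<bar>d i\<bar>" using False by linarith
    have "1 * \<bar>d i\<bar> < (2^i * \<bar>d i\<bar>) * \<bar>d i\<bar>"
      by (rule mult_strict_right_mono[OF g dp])
    moreover have "(2^i * \<bar>d i\<bar>) * \<bar>d i\<bar> = 2^i * (d i)\<^sup>2"
      by (simp add: power2_eq_square abs_mult_self_eq mult.assoc)
    ultimately have "\<bar>d i\<bar> < 2^i * (d i)\<^sup>2" by simp
    then show ?thesis unfolding real_norm_def using hp by linarith
  qed
  have "summable (\<lambda>i. (1/2::real)^i + 2^i * (d i)\<^sup>2)"
    by (intro summable_add assms) simp
  then have "summable (\<lambda>i. norm (d i))"
    by (rule summable_comparison_test'[where N=0]) (use b in simp)
  then show ?thesis by (rule summable_norm_cancel)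
qed

lemma L2_complete:
  assumes s: "\<And>n. s n \<in> L2 M"
    and C: "\<And>e. e > 0 \<Longrightarrow> \<exists>N. \<forall>n\<ge>N. \<forall>m\<ge>N. Q M (\<lambda>\<omega>. s n \<omega> - s m \<omega>) < e"
  shows "\<exists>v r. v \<in> L2 M \<and> strict_mono r \<and> (AE \<omega> in M. (\<lambda>i. s (r i) \<omega>) \<longlonglongrightarrow> v \<omega>)
            \<and> (\<lambda>n. Q M (\<lambda>\<omega>. s n \<omega> - v \<omega>)) \<longlonglongrightarrow> 0"
proof -
  note [measurable] = L2_meas[OF s]
  have "\<exists>r. \<forall>n. (\<forall>i\<ge>r n. \<forall>j\<ge>r n. Q M (\<lambda>\<omega>. s i \<omega> - s j \<omega>) < (1/8)^n) \<and> r (Suc n) > r n"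
  proof (intro dependent_nat_choice, goal_cases)
    case 1 then show ?case using C[of "(1/8)^0"] by auto
  next
    case (2 x n)
    obtain N where N: "\<And>i j. i \<ge> N \<Longrightarrow> j \<ge> N \<Longrightarrow> Q M (\<lambda>\<omega>. s i \<omega> - s j \<omega>) < (1/8)^Suc n"
      using C[of "(1/8)^Suc n"] by auto
    have "\<forall>i\<ge>max N (Suc x). \<forall>j\<ge>max N (Suc x). Q M (\<lambda>\<omega>. s i \<omega> - s j \<omega>) < (1/8)^Suc n"
      using N by (metis max.bounded_iff)
    moreover have "x < max N (Suc x)" by simp
    ultimately show ?case by blast
  qed
  then obtain r where r: "\<And>n i j. i \<ge> r n \<Longrightarrow> j \<ge> r n \<Longrightarrow> Q M (\<lambda>\<omega>. s i \<omega> - s j \<omega>) < (1/8)^n"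
    and rs: "\<And>n. r (Suc n) > r n" by blast
  have smr: "strict_mono r" using rs by (simp add: strict_mono_Suc_iff)
  define d where "d i \<omega> = s (r (Suc i)) \<omega> - s (r i) \<omega>" for i \<omega>
  have dL2: "d i \<in> L2 M" for i unfolding d_def by (intro L2_diff s)
  note [measurable] = L2_meas[OF dL2]
  have Qd: "Q M (d i) < (1/8)^i" for i
    unfolding d_def using r[of i "r (Suc i)" "r i"] rs[of i] by simp
  define H where "H \<omega> = (\<Sum>i. ennreal (2^i * (d i \<omega>)\<^sup>2))" for \<omega>
  have Hm[measurable]: "H \<in> borel_measurable M" unfolding H_def by measurable
  have each: "(\<integral>\<^sup>+\<omega>. ennreal (2^i * (d i \<omega>)\<^sup>2) \<partial>M) \<le> ennreal ((1/4)^i)" for i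
  proof -
    have "(\<integral>\<^sup>+\<omega>. ennreal (2^i * (d i \<omega>)\<^sup>2) \<partial>M) = ennreal (\<integral>\<omega>. 2^i * (d i \<omega>)\<^sup>2 \<partial>M)"
      using L2_sq_int[OF dL2] by (intro nn_integral_eq_integral) auto
    also have "(\<integral>\<omega>. 2^i * (d i \<omega>)\<^sup>2 \<partial>M) = 2^i * Q M (d i)" by (simp add: Q_def)
    also have "2^i * Q M (d i) \<le> 2^i * (1/8)^i" using Qd[of i] by simp
    also have "(2::real)^i * (1/8)^i = (1/4)^i" by (simp add: power_mult_distrib[symmetric])
    finally show ?thesis by (simp add: ennreal_leI)
  qed
  have "(\<integral>\<^sup>+\<omega>. H \<omega> \<partial>M) = (\<Sum>i. \<integral>\<^sup>+\<omega>. ennreal (2^i * (d i \<omega>)\<^sup>2) \<partial>M)"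
    unfolding H_def by (rule nn_integral_suminf) measurable
  also have "\<dots> \<le> (\<Sum>i. ennreal ((1/4)^i))" by (intro suminf_le each) auto
  also have "\<dots> = ennreal (\<Sum>i. (1/4)^i)" by (intro suminf_ennreal2) auto
  also have "\<dots> < \<infinity>" by simp
  finally have "AE \<omega> in M. H \<omega> < \<infinity>" by (intro finite_nn_integral_imp_ae_finite) auto
  then have conv: "AE \<omega> in M. convergent (\<lambda>i. s (r i) \<omega>)"
  proof (eventually_elim)
    case (elim \<omega>)
    then have "summable (\<lambda>i. 2^i * (d i \<omega>)\<^sup>2)"
      unfolding H_def by (intro summable_suminf_not_top) auto
    then have "summable (\<lambda>i. d i \<omega>)" by (rule ae_summable_lemma)
    then have "(\<lambda>n. \<Sum>i<n. d i \<omega>) \<longlonglongrightarrow> (\<Sum>i. d i \<omega>)" by (rule summable_LIMSEQ)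
    moreover have "(\<lambda>n. \<Sum>i<n. d i \<omega>) = (\<lambda>n. s (r n) \<omega> - s (r 0) \<omega>)"
      unfolding d_def using sum_lessThan_telescope by fastforce
    ultimately have "(\<lambda>n. s (r n) \<omega> - s (r 0) \<omega> + s (r 0) \<omega>) \<longlonglongrightarrow> (\<Sum>i. d i \<omega>) + s (r 0) \<omega>"
      by (intro tendsto_add) auto
    then show ?case by (auto simp: convergent_def)
  qed
  define v where "v \<omega> = lim (\<lambda>i. s (r i) \<omega>)" for \<omega>
  have vm[measurable]: "v \<in> borel_measurable M" unfolding v_def by measurable
  have vconv: "AE \<omega> in M. (\<lambda>i. s (r i) \<omega>) \<longlonglongrightarrow> v \<omega>"
    using conv by eventually_elim (simp add: v_def convergent_LIMSEQ_iff)
  have fatou: "(\<integral>\<^sup>+\<omega>. ennreal ((s n \<omega> - v \<omega>)\<^sup>2) \<partial>M)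
      \<le> liminf (\<lambda>i. ennreal (Q M (\<lambda>\<omega>. s n \<omega> - s (r i) \<omega>)))" for n
  proof -
    have "(\<integral>\<^sup>+\<omega>. ennreal ((s n \<omega> - v \<omega>)\<^sup>2) \<partial>M)
        = (\<integral>\<^sup>+\<omega>. liminf (\<lambda>i. ennreal ((s n \<omega> - s (r i) \<omega>)\<^sup>2)) \<partial>M)"
    proof (rule nn_integral_cong_AE)
      show "AE \<omega> in M. ennreal ((s n \<omega> - v \<omega>)\<^sup>2) = liminf (\<lambda>i. ennreal ((s n \<omega> - s (r i) \<omega>)\<^sup>2))"
        using vconv
      proof eventually_elim
        case (elim \<omega>)
        then have "(\<lambda>i. ennreal ((s n \<omega> - s (r i) \<omega>)\<^sup>2)) \<longlonglongrightarrow> ennreal ((s n \<omega> - v \<omega>)\<^sup>2)"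
          by (intro tendsto_ennrealI tendsto_intros)
        then have "liminf (\<lambda>i. ennreal ((s n \<omega> - s (r i) \<omega>)\<^sup>2)) = ennreal ((s n \<omega> - v \<omega>)\<^sup>2)"
          by (rule lim_imp_Liminf[OF sequentially_bot])
        then show ?case by (rule sym)
      qed
    qed
    also have "\<dots> \<le> liminf (\<lambda>i. \<integral>\<^sup>+\<omega>. ennreal ((s n \<omega> - s (r i) \<omega>)\<^sup>2) \<partial>M)"
      by (intro nn_integral_liminf) measurable
    also have "(\<lambda>i. \<integral>\<^sup>+\<omega>. ennreal ((s n \<omega> - s (r i) \<omega>)\<^sup>2) \<partial>M)
        = (\<lambda>i. ennreal (Q M (\<lambda>\<omega>. s n \<omega> - s (r i) \<omega>)))"
    proof
      fix i
      show "(\<integral>\<^sup>+\<omega>. ennreal ((s n \<omega> - s (r i) \<omega>)\<^sup>2) \<partial>M) = ennreal (Q M (\<lambda>\<omega>. s n \<omega> - s (r i) \<omega>))"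
        unfolding Q_def using L2_sq_int[OF L2_diff[OF s s, of n "r i"]]
        by (intro nn_integral_eq_integral) auto
    qed
    finally show ?thesis .
  qed
  have small: "\<exists>N. \<forall>n\<ge>N. integrable M (\<lambda>\<omega>. (s n \<omega> - v \<omega>)\<^sup>2) \<and> Q M (\<lambda>\<omega>. s n \<omega> - v \<omega>) \<le> e"
    if e: "e > 0" for e
  proof -
    obtain N where N: "\<And>n m. n \<ge> N \<Longrightarrow> m \<ge> N \<Longrightarrow> Q M (\<lambda>\<omega>. s n \<omega> - s m \<omega>) < e"
      using C[OF e] by auto
    have "integrable M (\<lambda>\<omega>. (s n \<omega> - v \<omega>)\<^sup>2) \<and> Q M (\<lambda>\<omega>. s n \<omega> - v \<omega>) \<le> e" if n: "n \<ge> N" for n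
    proof -
      have "liminf (\<lambda>i. ennreal (Q M (\<lambda>\<omega>. s n \<omega> - s (r i) \<omega>))) \<le> liminf (\<lambda>i. ennreal e)"
      proof (rule Liminf_mono)
        have "eventually (\<lambda>i. i \<ge> N) sequentially" by simp
        then show "\<forall>\<^sub>F i in sequentially. ennreal (Q M (\<lambda>\<omega>. s n \<omega> - s (r i) \<omega>)) \<le> ennreal e"
        proof eventually_elim
          case (elim i)
          have "r i \<ge> i" using smr by (rule strict_mono_imp_increasing)
          then show ?case using N[OF n, of "r i"] elim by (intro ennreal_leI) simp
        qed
      qed
      then have I: "(\<integral>\<^sup>+\<omega>. ennreal ((s n \<omega> - v \<omega>)\<^sup>2) \<partial>M) \<le> ennreal e"
        using fatou[of n] by (simp add: Liminf_const)
      have int: "integrable M (\<lambda>\<omega>. (s n \<omega> - v \<omega>)\<^sup>2)"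
      proof (rule integrableI_bounded)
        show "(\<lambda>\<omega>. (s n \<omega> - v \<omega>)\<^sup>2) \<in> borel_measurable M" by measurable
        show "(\<integral>\<^sup>+\<omega>. ennreal (norm ((s n \<omega> - v \<omega>)\<^sup>2)) \<partial>M) < \<infinity>"
          using I by (simp add: order_le_less_trans)
      qed
      have "(\<integral>\<^sup>+\<omega>. ennreal ((s n \<omega> - v \<omega>)\<^sup>2) \<partial>M) = ennreal (Q M (\<lambda>\<omega>. s n \<omega> - v \<omega>))"
        unfolding Q_def using int by (intro nn_integral_eq_integral) auto
      then have "Q M (\<lambda>\<omega>. s n \<omega> - v \<omega>) \<le> e" using I e Q_nonneg[of M "\<lambda>\<omega>. s n \<omega> - v \<omega>"]
        by (simp add: ennreal_le_iff)
      with int show ?thesis by simp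
    qed
    then show ?thesis by blast
  qed
  have vL2: "v \<in> L2 M"
  proof -
    have "(1::real) > 0" by simp
    from small[OF this] obtain N where N: "\<forall>n\<ge>N. integrable M (\<lambda>\<omega>. (s n \<omega> - v \<omega>)\<^sup>2) \<and> Q M (\<lambda>\<omega>. s n \<omega> - v \<omega>) \<le> 1"
      by blast
    have "(\<lambda>\<omega>. s N \<omega> - v \<omega>) \<in> L2 M" using N by (simp add: L2_def)
    from L2_diff[OF s[of N] this] show ?thesis by simp
  qed
  have "(\<lambda>n. Q M (\<lambda>\<omega>. s n \<omega> - v \<omega>)) \<longlonglongrightarrow> 0"
  proof (rule LIMSEQ_I)
    fix e :: real assume ep: "e > 0"
    have "e/2 > 0" using ep by simp
    from small[OF this] obtain N where NN0: "\<forall>n\<ge>N. integrable M (\<lambda>\<omega>. (s n \<omega> - v \<omega>)\<^sup>2) \<and> Q M (\<lambda>\<omega>. s n \<omega> - v \<omega>) \<le> e/2"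
      by blast
    have NN: "Q M (\<lambda>\<omega>. s n \<omega> - v \<omega>) \<le> e/2" if "n \<ge> N" for n
      using NN0 that by blast
    have "norm (Q M (\<lambda>\<omega>. s n \<omega> - v \<omega>) - 0) < e" if "n \<ge> N" for n
      using NN[OF that] ep Q_nonneg[of M "\<lambda>\<omega>. s n \<omega> - v \<omega>"] by simp
    then show "\<exists>no. \<forall>n\<ge>no. norm (Q M (\<lambda>\<omega>. s n \<omega> - v \<omega>) - 0) < e" by blast
  qed
  then have "v \<in> L2 M \<and> strict_mono r \<and> (AE \<omega> in M. (\<lambda>i. s (r i) \<omega>) \<longlonglongrightarrow> v \<omega>)
            \<and> (\<lambda>n. Q M (\<lambda>\<omega>. s n \<omega> - v \<omega>)) \<longlonglongrightarrow> 0"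
    using vL2 smr vconv by (intro conjI)
  then show ?thesis by blast
qed



definition cc :: "(nat \<Rightarrow> 'w \<Rightarrow> real) \<Rightarrow> nat \<Rightarrow> ('w \<Rightarrow> real) \<Rightarrow> bool" where
  "cc u n z \<longleftrightarrow> (\<exists>N c. (\<forall>k. 0 \<le> c k) \<and> (\<forall>k. k < n \<or> N \<le> k \<longrightarrow> c k = 0) \<and> sum c {..<N} = (1::real)
      \<and> z = (\<lambda>\<omega>. \<Sum>k<N. c k * u k \<omega>))"

lemma sum_ext_zero:
  fixes f :: "nat \<Rightarrow> 'a::comm_monoid_add"
  assumes "\<And>k. N \<le> k \<Longrightarrow> f k = 0" "N \<le> N'"
  shows "sum f {..<N'} = sum f {..<N}"
  by (rule sum.mono_neutral_left[symmetric]) (use assms in auto)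

lemma L2inner_sum:
  assumes u: "\<And>k. u k \<in> L2 M" and a: "a \<in> L2 M"
  shows "L2inner M (\<lambda>\<omega>. \<Sum>k<N. c k * u k \<omega>) a = (\<Sum>k<N. c k * L2inner M (u k) a)"
proof -
  have "L2inner M (\<lambda>\<omega>. \<Sum>k<N. c k * u k \<omega>) a = (\<integral>\<omega>. (\<Sum>k<N. c k * (u k \<omega> * a \<omega>)) \<partial>M)"
    unfolding L2inner_def by (simp add: sum_distrib_right mult.assoc)
  also have "\<dots> = (\<Sum>k<N. (\<integral>\<omega>. c k * (u k \<omega> * a \<omega>) \<partial>M))"
    by (rule Bochner_Integration.integral_sum) (use L2_prod_int[OF u a] in simp)
  also have "\<dots> = (\<Sum>k<N. c k * L2inner M (u k) a)"
    by (simp add: L2inner_def)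
  finally show ?thesis .
qed

lemma L2inner_diff:
  assumes "u \<in> L2 M" "v \<in> L2 M" "a \<in> L2 M"
  shows "L2inner M (\<lambda>\<omega>. u \<omega> - v \<omega>) a = L2inner M u a - L2inner M v a"
  unfolding L2inner_def using L2_prod_int[OF assms(1,3)] L2_prod_int[OF assms(2,3)]
  by (simp add: left_diff_distrib)

lemma parallelogram:
  assumes z: "z \<in> L2 M" and y: "y \<in> L2 M"
  shows "Q M (\<lambda>\<omega>. z \<omega> - y \<omega>) + 4 * Q M (\<lambda>\<omega>. (z \<omega> + y \<omega>) / 2) = 2 * Q M z + 2 * Q M y"
proof -
  have h: "(\<lambda>\<omega>. (z \<omega> + y \<omega>) / 2) \<in> L2 M"
    using L2_cmult[OF L2_add[OF z y], of "1/2"] by simp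
  have "Q M (\<lambda>\<omega>. z \<omega> - y \<omega>) + 4 * Q M (\<lambda>\<omega>. (z \<omega> + y \<omega>) / 2)
      = (\<integral>\<omega>. (z \<omega> - y \<omega>)\<^sup>2 + 4 * ((z \<omega> + y \<omega>) / 2)\<^sup>2 \<partial>M)"
    unfolding Q_def using L2_sq_int[OF L2_diff[OF z y]] L2_sq_int[OF h] by simp
  also have "\<dots> = (\<integral>\<omega>. 2 * (z \<omega>)\<^sup>2 + 2 * (y \<omega>)\<^sup>2 \<partial>M)"
    by (rule Bochner_Integration.integral_cong) (simp_all add: power2_eq_square field_simps)
  also have "\<dots> = 2 * Q M z + 2 * Q M y"
    unfolding Q_def using L2_sq_int[OF z] L2_sq_int[OF y] by simp
  finally show ?thesis .
qed

lemma cc_L2: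
  assumes u: "\<And>k. u k \<in> L2 M" and "cc u n z"
  shows "z \<in> L2 M"
  using assms(2) unfolding cc_def by (auto intro!: L2_sum L2_cmult u)

lemma cc_nonneg:
  assumes nn: "\<And>k. AE \<omega> in M. u k \<omega> \<ge> 0" and "cc u n z"
  shows "AE \<omega> in M. z \<omega> \<ge> 0"
proof -
  obtain N c where c: "\<forall>k. 0 \<le> c k" and z: "z = (\<lambda>\<omega>. \<Sum>k<N. c k * u k \<omega>)"
    using assms(2) unfolding cc_def by blast
  have "AE \<omega> in M. \<forall>k. u k \<omega> \<ge> 0" using nn by (simp add: AE_all_countable)
  then show ?thesis
    by eventually_elim (simp add: z c sum_nonneg)
qed

lemma cc_self: "cc u n (u n)"
  unfolding cc_def
  by (rule exI[of _ "Suc n"], rule exI[of _ "\<lambda>k. if k = n then 1 else 0"])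
     (auto simp: if_distrib cong: if_cong)

lemma cc_mono: "cc u m z \<Longrightarrow> n \<le> m \<Longrightarrow> cc u n z"
proof -
  assume "cc u m z" "n \<le> m"
  then obtain N c where c: "\<forall>k. 0 \<le> c k" "\<forall>k. k < m \<or> N \<le> k \<longrightarrow> c k = 0" "sum c {..<N} = 1"
    and zz: "z = (\<lambda>\<omega>. \<Sum>k<N. c k * u k \<omega>)"
    unfolding cc_def by blast
  have "\<forall>k. k < n \<or> N \<le> k \<longrightarrow> c k = 0" using c(2) \<open>n \<le> m\<close> by auto
  then show ?thesis unfolding cc_def using c(1,3) zz by blast
qed

lemma cc_mid:
  assumes "cc u n z" "cc u n y"
  shows "cc u n (\<lambda>\<omega>. (z \<omega> + y \<omega>) / 2)"
proof -
  obtain N c where c: "\<forall>k. 0 \<le> c k" "\<forall>k. k < n \<or> N \<le> k \<longrightarrow> c k = 0" "sum c {..<N} = 1"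
    and z: "z = (\<lambda>\<omega>. \<Sum>k<N. c k * u k \<omega>)"
    using assms(1) unfolding cc_def by blast
  obtain N' c' where c': "\<forall>k. 0 \<le> c' k" "\<forall>k. k < n \<or> N' \<le> k \<longrightarrow> c' k = 0" "sum c' {..<N'} = 1"
    and y: "y = (\<lambda>\<omega>. \<Sum>k<N'. c' k * u k \<omega>)"
    using assms(2) unfolding cc_def by blast
  define K where "K = max N N'"
  define d where "d k = (c k + c' k) / 2" for k
  have s1: "sum c {..<K} = sum c {..<N}" and s2: "sum c' {..<K} = sum c' {..<N'}"
    by (rule sum_ext_zero; use c c' in \<open>auto simp: K_def\<close>)+
  have r1: "(\<Sum>k<K. c k * u k \<omega>) = (\<Sum>k<N. c k * u k \<omega>)" for \<omega>
    by (rule sum_ext_zero; use c in \<open>auto simp: K_def\<close>)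
  have r2: "(\<Sum>k<K. c' k * u k \<omega>) = (\<Sum>k<N'. c' k * u k \<omega>)" for \<omega>
    by (rule sum_ext_zero; use c' in \<open>auto simp: K_def\<close>)
  have "(\<forall>k. 0 \<le> d k)" using c c' by (simp add: d_def)
  moreover have "\<forall>k. k < n \<or> K \<le> k \<longrightarrow> d k = 0" using c c' by (auto simp: d_def K_def)
  moreover have "sum d {..<K} = 1"
    using s1 s2 c c' by (simp add: d_def sum_divide_distrib[symmetric] sum.distrib)
  moreover have "(\<lambda>\<omega>. (z \<omega> + y \<omega>) / 2) = (\<lambda>\<omega>. \<Sum>k<K. d k * u k \<omega>)"
  proof
    fix \<omega>
    have "(\<Sum>k<K. d k * u k \<omega>) = ((\<Sum>k<K. c k * u k \<omega>) + (\<Sum>k<K. c' k * u k \<omega>)) / 2"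
      by (simp add: d_def sum_divide_distrib[symmetric] sum.distrib[symmetric] algebra_simps)
    then show "(z \<omega> + y \<omega>) / 2 = (\<Sum>k<K. d k * u k \<omega>)" by (simp add: z y r1 r2)
  qed
  ultimately show ?thesis unfolding cc_def by blast
qed

lemma cc_inner_close:
  assumes u: "\<And>k. u k \<in> L2 M" and a: "a \<in> L2 M" and z: "cc u n z"
    and close: "\<And>k. k \<ge> n \<Longrightarrow> \<bar>L2inner M (u k) a - l\<bar> \<le> e"
  shows "\<bar>L2inner M z a - l\<bar> \<le> e"
proof -
  obtain N c where c: "\<forall>k. 0 \<le> c k" "\<forall>k. k < n \<or> N \<le> k \<longrightarrow> c k = 0" "sum c {..<N} = 1"
    and zz: "z = (\<lambda>\<omega>. \<Sum>k<N. c k * u k \<omega>)"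
    using z unfolding cc_def by blast
  have "L2inner M z a - l = (\<Sum>k<N. c k * L2inner M (u k) a) - (\<Sum>k<N. c k) * l"
    using L2inner_sum[OF u a] c(3) by (simp add: zz)
  also have "\<dots> = (\<Sum>k<N. c k * (L2inner M (u k) a - l))"
    by (simp add: sum_distrib_right sum_subtractf right_diff_distrib)
  finally have "\<bar>L2inner M z a - l\<bar> \<le> (\<Sum>k<N. \<bar>c k * (L2inner M (u k) a - l)\<bar>)"
    by (simp add: sum_abs)
  also have "\<dots> \<le> (\<Sum>k<N. c k * e)"
  proof (rule sum_mono)
    fix k
    show "\<bar>c k * (L2inner M (u k) a - l)\<bar> \<le> c k * e"
    proof (cases "k < n")
      case True then show ?thesis using c by simp
    next
      case False
      then have "\<bar>L2inner M (u k) a - l\<bar> \<le> e" using close by simp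
      then show ?thesis using c(1) by (simp add: abs_mult mult_left_mono)
    qed
  qed
  also have "\<dots> = e" using c(3) by (simp add: sum_distrib_right[symmetric])
  finally show ?thesis .
qed



lemma Q_sym: "Q M (\<lambda>\<omega>. a \<omega> - b \<omega>) = Q M (\<lambda>\<omega>. b \<omega> - a \<omega>)"
  by (simp add: Q_def power2_commute)

lemma lin_aux:
  fixes Dn X P A B Dm a b :: real
  assumes "Dn \<le> X" "P + 4 * X = 2 * A + 2 * B" "A < Dn + a" "B < Dm + b"
  shows "P \<le> 2 * (Dm - Dn) + 2 * a + 2 * b"
  using assms by argo

lemma lin_aux2:
  fixes Dn P Dm a b e :: real
  assumes "Dm - Dn < e/8" "P \<le> 2 * (Dm - Dn) + 2 * a + 2 * b" "a < e/8" "b < e/8" "e > 0"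
  shows "P < e"
  using assms by argo

lemma L2_weak_limit:
  assumes u: "\<And>k. u k \<in> L2 M" and nn: "\<And>k. AE \<omega> in M. u k \<omega> \<ge> 0" and B: "\<And>k. Q M (u k) \<le> B"
  shows "\<exists>v. v \<in> L2 M \<and> (AE \<omega> in M. v \<omega> \<ge> 0) \<and>
    (\<forall>a l. a \<in> L2 M \<longrightarrow> (\<lambda>k. L2inner M (u k) a) \<longlonglongrightarrow> l \<longrightarrow> L2inner M v a = l)"
proof -
  define S where "S n = {Q M z | z. cc u n z}" for n
  define D where "D n = Inf (S n)" for n
  have Sne: "S n \<noteq> {}" for n using cc_self[of u n] by (auto simp: S_def)
  have Sbdd: "bdd_below (S n)" for n
    unfolding S_def bdd_below_def using Q_nonneg by blast
  have Dle: "D n \<le> Q M z" if "cc u n z" for n z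
    unfolding D_def by (rule cInf_lower) (use that Sbdd in \<open>auto simp: S_def\<close>)
  have DB: "D n \<le> B" for n using Dle[OF cc_self, of n] B[of n] by simp
  have Dmono: "D n \<le> D m" if "n \<le> m" for n m
    unfolding D_def
  proof (rule cInf_superset_mono[OF Sne Sbdd])
    show "S m \<subseteq> S n" using cc_mono[OF _ that] by (auto simp: S_def)
  qed
  have "D \<longlonglongrightarrow> (SUP i. D i)"
    by (rule LIMSEQ_incseq_SUP) (use DB Dmono in \<open>auto simp: bdd_above_def incseq_def\<close>)
  then have DC: "Cauchy D" by (rule LIMSEQ_imp_Cauchy)
  have "\<forall>n. \<exists>z. cc u n z \<and> Q M z < D n + 1 / real (Suc n)"
  proof
    fix n
    have "Inf (S n) < D n + 1 / real (Suc n)" by (simp add: D_def)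
    from cInf_lessD[OF Sne this] show "\<exists>z. cc u n z \<and> Q M z < D n + 1 / real (Suc n)"
      by (auto simp: S_def)
  qed
  then obtain \<nu> where \<nu>cc: "\<And>n. cc u n (\<nu> n)" and \<nu>Q: "\<And>n. Q M (\<nu> n) < D n + 1 / real (Suc n)"
    by metis
  have \<nu>L2: "\<nu> n \<in> L2 M" for n by (rule cc_L2[OF u \<nu>cc])
  have key: "Q M (\<lambda>\<omega>. \<nu> n \<omega> - \<nu> m \<omega>) \<le> 2 * (D m - D n) + 2 * (1 / real (Suc n)) + 2 * (1 / real (Suc m))"
    if nm: "n \<le> m" for n m
  proof -
    have "cc u n (\<lambda>\<omega>. (\<nu> n \<omega> + \<nu> m \<omega>) / 2)"
      by (rule cc_mid[OF \<nu>cc cc_mono[OF \<nu>cc nm]])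
    then have "D n \<le> Q M (\<lambda>\<omega>. (\<nu> n \<omega> + \<nu> m \<omega>) / 2)" by (rule Dle)
    moreover note parallelogram[OF \<nu>L2 \<nu>L2, of n m] \<nu>Q[of n] \<nu>Q[of m]
    ultimately have "Q M (\<lambda>\<omega>. \<nu> n \<omega> - \<nu> m \<omega>) \<le> 2 * (D m - D n) + 2 * (1 / real (Suc n)) + 2 * (1 / real (Suc m))"
      by (rule lin_aux)
    then show ?thesis .
  qed
  have cauchy: "\<exists>N. \<forall>n\<ge>N. \<forall>m\<ge>N. Q M (\<lambda>\<omega>. \<nu> n \<omega> - \<nu> m \<omega>) < e" if e: "e > 0" for e
  proof -
    obtain N1 where N1: "\<And>m n. m \<ge> N1 \<Longrightarrow> n \<ge> N1 \<Longrightarrow> norm (D m - D n) < e/8"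
      using CauchyD[OF DC, of "e/8"] e by auto
    obtain N2 where N2: "inverse (real (Suc N2)) < e/8"
      using reals_Archimedean[of "e/8"] e by auto
    have inv: "1 / real (Suc k) < e/8" if "k \<ge> N2" for k
    proof -
      have "1 / real (Suc k) \<le> 1 / real (Suc N2)" using that by (simp add: frac_le)
      then show ?thesis using N2 by (simp add: inverse_eq_divide)
    qed
    have "Q M (\<lambda>\<omega>. \<nu> n \<omega> - \<nu> m \<omega>) < e" if "n \<ge> max N1 N2" "m \<ge> max N1 N2" for n m
    proof (cases "n \<le> m")
      case True
      have "norm (D m - D n) < e/8" using N1 that by simp
      then have "D m - D n < e/8" by (simp only: real_norm_def abs_less_iff)
      from lin_aux2[OF this key[OF True] inv[of n] inv[of m] e] that show ?thesis by simp
    next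
      case False
      then have mn: "m \<le> n" by simp
      have "norm (D n - D m) < e/8" using N1 that by simp
      then have "D n - D m < e/8" by (simp only: real_norm_def abs_less_iff)
      from lin_aux2[OF this key[OF mn] inv[of m] inv[of n] e] that
      show ?thesis using Q_sym[of M "\<nu> n" "\<nu> m"] by simp
    qed
    then show ?thesis by blast
  qed
  obtain v r where vL2: "v \<in> L2 M" and r: "strict_mono r"
    and vae: "AE \<omega> in M. (\<lambda>i. \<nu> (r i) \<omega>) \<longlonglongrightarrow> v \<omega>"
    and vQ: "(\<lambda>n. Q M (\<lambda>\<omega>. \<nu> n \<omega> - v \<omega>)) \<longlonglongrightarrow> 0"
    using L2_complete[OF \<nu>L2 cauchy] by blast
  have "AE \<omega> in M. \<forall>n. \<nu> n \<omega> \<ge> 0"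
    using cc_nonneg[OF nn \<nu>cc] by (simp add: AE_all_countable)
  then have vnn: "AE \<omega> in M. v \<omega> \<ge> 0"
    using vae
  proof eventually_elim
    case (elim \<omega>)
    show ?case by (rule LIMSEQ_le_const[OF elim(2)]) (use elim(1) in auto)
  qed
  have weak: "L2inner M v a = l" if a: "a \<in> L2 M" and conv: "(\<lambda>k. L2inner M (u k) a) \<longlonglongrightarrow> l" for a l
  proof -
    have l1: "(\<lambda>n. L2inner M (\<nu> n) a) \<longlonglongrightarrow> l"
    proof (rule LIMSEQ_I)
      fix e :: real assume e: "e > 0"
      then have "e/2 > 0" by simp
      from LIMSEQ_D[OF conv this] obtain K where K: "\<And>k. k \<ge> K \<Longrightarrow> norm (L2inner M (u k) a - l) < e/2"
        by blast
      have "\<bar>L2inner M (\<nu> n) a - l\<bar> \<le> e/2" if "n \<ge> K" for n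
        by (rule cc_inner_close[OF u a \<nu>cc]) (use K that in \<open>auto intro: less_imp_le\<close>)
      then have "\<forall>n\<ge>K. norm (L2inner M (\<nu> n) a - l) < e" using e by force
      then show "\<exists>no. \<forall>n\<ge>no. norm (L2inner M (\<nu> n) a - l) < e" by blast
    qed
    have "(\<lambda>n. L2inner M (\<nu> n) a - L2inner M v a) \<longlonglongrightarrow> 0"
    proof (rule Lim_null_comparison)
      show "\<forall>\<^sub>F n in sequentially. norm (L2inner M (\<nu> n) a - L2inner M v a)
              \<le> sqrt (Q M (\<lambda>\<omega>. \<nu> n \<omega> - v \<omega>)) * L2norm M a"
      proof (intro always_eventually allI)
        fix n
        have "L2inner M (\<nu> n) a - L2inner M v a = L2inner M (\<lambda>\<omega>. \<nu> n \<omega> - v \<omega>) a"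
          using L2inner_diff[OF \<nu>L2 vL2 a] by simp
        also have "\<bar>\<dots>\<bar> \<le> L2norm M (\<lambda>\<omega>. \<nu> n \<omega> - v \<omega>) * L2norm M a"
          by (rule L2_CS[OF L2_diff[OF \<nu>L2 vL2] a])
        finally show "norm (L2inner M (\<nu> n) a - L2inner M v a)
              \<le> sqrt (Q M (\<lambda>\<omega>. \<nu> n \<omega> - v \<omega>)) * L2norm M a" by (simp add: L2norm_Q)
      qed
      show "(\<lambda>n. sqrt (Q M (\<lambda>\<omega>. \<nu> n \<omega> - v \<omega>)) * L2norm M a) \<longlonglongrightarrow> 0"
      proof -
        have "(\<lambda>n. sqrt (Q M (\<lambda>\<omega>. \<nu> n \<omega> - v \<omega>))) \<longlonglongrightarrow> 0"
          using tendsto_real_sqrt[OF vQ] by simp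
        from tendsto_mult_left_zero[OF this] show ?thesis .
      qed
    qed
    then have l2: "(\<lambda>n. L2inner M (\<nu> n) a) \<longlonglongrightarrow> L2inner M v a" by (simp add: LIM_zero_iff)
    show ?thesis using LIMSEQ_unique[OF l2 l1] .
  qed
  show ?thesis using vL2 vnn weak by blast
qed



lemma rho_pos_mono:
  fixes \<rho> :: "nat \<Rightarrow> real"
  assumes pos: "\<rho> 0 > 0" and gamma: "\<gamma> > 1" and step: "\<And>k. \<rho> (Suc k) = \<rho> k \<or> \<rho> (Suc k) = \<gamma> * \<rho> k"
  shows "\<rho> k > 0" "\<rho> k \<le> \<rho> (Suc k)"
proof -
  show p: "\<rho> k > 0" for k
  proof (induction k)
    case 0 then show ?case using pos .
  next
    case (Suc k) then show ?case using step[of k] gamma by auto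
  qed
  show "\<rho> k \<le> \<rho> (Suc k)" using step[of k] gamma p[of k] by auto
qed

lemma rho_eventually_const:
  fixes \<rho> :: "nat \<Rightarrow> real"
  assumes pos: "\<rho> 0 > 0" and gamma: "\<gamma> > 1" and step: "\<And>k. \<rho> (Suc k) = \<rho> k \<or> \<rho> (Suc k) = \<gamma> * \<rho> k"
    and bdd: "bdd_above (range \<rho>)"
  shows "\<exists>K. \<forall>k\<ge>K. \<rho> (Suc k) = \<rho> k"
proof (rule ccontr)
  assume "\<not> ?thesis"
  then have inf: "\<exists>k\<ge>K. \<rho> (Suc k) = \<gamma> * \<rho> k" for K using step by blast
  have inc: "incseq \<rho>" using rho_pos_mono(2)[OF pos gamma step] by (rule incseq_SucI)
  have big: "\<exists>k. \<rho> k \<ge> \<rho> 0 * \<gamma> ^ n" for n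
  proof (induction n)
    case 0 then show ?case by auto
  next
    case (Suc n)
    then obtain k where k: "\<rho> k \<ge> \<rho> 0 * \<gamma> ^ n" by blast
    obtain k' where k': "k' \<ge> k" "\<rho> (Suc k') = \<gamma> * \<rho> k'" using inf by blast
    have "\<rho> k' \<ge> \<rho> k" using inc k'(1) by (simp add: incseq_def)
    then have "\<gamma> * \<rho> k' \<ge> \<gamma> * (\<rho> 0 * \<gamma> ^ n)" using k gamma by (intro mult_left_mono) auto
    then have "\<rho> (Suc k') \<ge> \<rho> 0 * \<gamma> ^ Suc n" using k'(2) by (simp add: mult_ac)
    then show ?case by blast
  qed
  obtain R where R: "\<And>k. \<rho> k \<le> R" using bdd by (auto simp: bdd_above_def)
  obtain n where n: "R / \<rho> 0 < \<gamma> ^ n" using real_arch_pow[OF gamma] by blast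
  obtain k where "\<rho> k \<ge> \<rho> 0 * \<gamma> ^ n" using big by blast
  moreover have "R < \<rho> 0 * \<gamma> ^ n" using n pos by (simp add: divide_less_eq mult.commute)
  ultimately show False using R[of k] by simp
qed

lemma geo_tendsto:
  fixes m :: "nat \<Rightarrow> real"
  assumes dec: "\<And>k. k \<ge> K \<Longrightarrow> m (Suc k) \<le> \<tau> * m k" and t: "0 \<le> \<tau>" "\<tau> < 1" and nn: "\<And>k. m k \<ge> 0"
  shows "m \<longlonglongrightarrow> 0"
proof -
  have b: "m (j + K) \<le> \<tau> ^ j * m K" for j
  proof (induction j)
    case 0 then show ?case by simp
  next
    case (Suc j)
    have "m (Suc j + K) \<le> \<tau> * m (j + K)" using dec[of "j + K"] by simp
    also have "\<dots> \<le> \<tau> * (\<tau> ^ j * m K)" using Suc t by (intro mult_left_mono) auto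
    finally show ?case by (simp add: mult_ac)
  qed
  have "(\<lambda>j. m (j + K)) \<longlonglongrightarrow> 0"
  proof (rule Lim_null_comparison)
    show "\<forall>\<^sub>F j in sequentially. norm (m (j + K)) \<le> \<tau> ^ j * m K"
      using b nn by (intro always_eventually allI) simp
    show "(\<lambda>j. \<tau> ^ j * m K) \<longlonglongrightarrow> 0"
      by (intro tendsto_mult_left_zero LIMSEQ_power_zero) (use t in simp)
  qed
  then show ?thesis by (rule LIMSEQ_offset)
qed

lemma pw1:
  fixes w W \<rho> R G :: real
  assumes "0 \<le> w" "w \<le> W" "0 < \<rho>" "\<rho> \<le> R"
  shows "(max (w + \<rho> * G) 0)\<^sup>2 \<le> 2 * W\<^sup>2 + 2 * R\<^sup>2 * G\<^sup>2"
proof -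
  have "\<rho> * G \<le> \<rho> * \<bar>G\<bar>" using assms by (intro mult_left_mono) auto
  also have "\<dots> \<le> R * \<bar>G\<bar>" using assms by (intro mult_right_mono) auto
  finally have "\<rho> * G \<le> R * \<bar>G\<bar>" .
  then have "max (w + \<rho> * G) 0 \<le> W + R * \<bar>G\<bar>" using assms by auto
  moreover have "0 \<le> max (w + \<rho> * G) 0" by simp
  ultimately have "(max (w + \<rho> * G) 0)\<^sup>2 \<le> (W + R * \<bar>G\<bar>)\<^sup>2" by (rule power_mono)
  also have "\<dots> \<le> 2 * W\<^sup>2 + 2 * R\<^sup>2 * G\<^sup>2"
  proof -
    have "0 \<le> (W - R * \<bar>G\<bar>)\<^sup>2" by simp
    then show ?thesis by (simp add: power2_eq_square algebra_simps abs_mult_self_eq)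
  qed
  finally show ?thesis .
qed

lemma pw2:
  fixes w \<rho> G :: real
  assumes "0 \<le> w" "0 < \<rho>"
  shows "\<bar>max G 0\<bar> \<le> \<bar>min (- G) (w / \<rho>)\<bar>"
proof -
  have "0 \<le> w / \<rho>" using assms by simp
  then show ?thesis by (auto simp: min_def max_def)
qed

lemma pw3:
  fixes w \<rho> G :: real
  assumes "0 \<le> w" "0 < \<rho>"
  shows "\<bar>max (w + \<rho> * G) 0 * G\<bar> \<le> max (w + \<rho> * G) 0 * \<bar>min (- G) (w / \<rho>)\<bar>"
proof (cases "w + \<rho> * G > 0")
  case True
  then have "- G < w / \<rho>" using assms by (simp add: field_simps)
  then have "min (- G) (w / \<rho>) = - G" by simp
  then show ?thesis using True by (simp add: abs_mult)
next
  case False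
  then show ?thesis by simp
qed

lemma onorm_apply_bound:
  fixes F :: "'a::real_normed_vector \<Rightarrow> real"
  assumes K: "\<And>d. \<bar>F d\<bar> \<le> K * norm d"
  shows "\<bar>F d\<bar> \<le> onorm F * norm d"
proof (cases "d = 0")
  case True
  then show ?thesis using K[of d] by simp
next
  case False
  have "bdd_above (range (\<lambda>x. norm (F x) / norm x))"
  proof (rule bdd_aboveI2)
    fix x
    show "norm (F x) / norm x \<le> max K 0"
    proof (cases "x = 0")
      case True then show ?thesis by simp
    next
      case False
      then have "norm (F x) / norm x \<le> K" using K[of x] by (simp add: divide_le_eq)
      then show ?thesis by simp
    qed
  qed
  then have "norm (F d) / norm d \<le> onorm F" unfolding onorm_def by (rule cSUP_upper[OF UNIV_I])
  then show ?thesis using False by (simp add: divide_le_eq)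
qed

lemma L2inner_diff2:
  assumes "a \<in> L2 M" "b \<in> L2 M" "u \<in> L2 M"
  shows "L2inner M u (\<lambda>\<omega>. a \<omega> - b \<omega>) = L2inner M u a - L2inner M u b"
  unfolding L2inner_def using L2_prod_int[OF assms(3,1)] L2_prod_int[OF assms(3,2)]
  by (simp add: right_diff_distrib)

lemma Q_tri2:
  assumes a[measurable]: "a \<in> borel_measurable M" and b: "b \<in> L2 M" and c: "c \<in> L2 M"
    and le: "AE \<omega> in M. \<bar>a \<omega>\<bar> \<le> \<bar>b \<omega>\<bar> + \<bar>c \<omega>\<bar>"
  shows "Q M a \<le> 2 * Q M b + 2 * Q M c"
proof -
  have bc: "(\<lambda>\<omega>. \<bar>b \<omega>\<bar> + \<bar>c \<omega>\<bar>) \<in> L2 M" by (intro L2_add L2_abs b c)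
  have "Q M a \<le> Q M (\<lambda>\<omega>. \<bar>b \<omega>\<bar> + \<bar>c \<omega>\<bar>)"
    by (rule L2_bound(2)[OF bc a]) (use le in \<open>auto elim!: eventually_mono\<close>)
  also have "\<dots> \<le> (\<integral>\<omega>. 2 * (b \<omega>)\<^sup>2 + 2 * (c \<omega>)\<^sup>2 \<partial>M)"
    unfolding Q_def
  proof (rule integral_mono)
    show "integrable M (\<lambda>\<omega>. (\<bar>b \<omega>\<bar> + \<bar>c \<omega>\<bar>)\<^sup>2)" using L2_sq_int[OF bc] .
    show "integrable M (\<lambda>\<omega>. 2 * (b \<omega>)\<^sup>2 + 2 * (c \<omega>)\<^sup>2)" using L2_sq_int[OF b] L2_sq_int[OF c] by simp
    fix \<omega>
    have "0 \<le> (\<bar>b \<omega>\<bar> - \<bar>c \<omega>\<bar>)\<^sup>2" by simp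
    then show "(\<bar>b \<omega>\<bar> + \<bar>c \<omega>\<bar>)\<^sup>2 \<le> 2 * (b \<omega>)\<^sup>2 + 2 * (c \<omega>)\<^sup>2"
      by (simp add: power2_eq_square algebra_simps abs_mult_self_eq)
  qed
  also have "\<dots> = 2 * Q M b + 2 * Q M c"
    unfolding Q_def using L2_sq_int[OF b] L2_sq_int[OF c] by simp
  finally show ?thesis .
qed

context
  fixes M :: "'w measure" and e :: "'y::real_normed_vector \<Rightarrow> 'w \<Rightarrow> real"
  assumes emb: "dense_L2_embedding M e"
begin

lemma emb_L2: "e y \<in> L2 M"
  using emb by (simp add: dense_L2_embedding_def)

lemma emb_diff: "AE \<omega> in M. e (y1 - y2) \<omega> = e y1 \<omega> - e y2 \<omega>"
proof -
  have "AE \<omega> in M. e (1 *\<^sub>R y1 + (-1) *\<^sub>R y2) \<omega> = 1 * e y1 \<omega> + (-1) * e y2 \<omega>"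
  proof -
    have "\<forall>a b y1 y2. AE \<omega> in M. e (a *\<^sub>R y1 + b *\<^sub>R y2) \<omega> = a * e y1 \<omega> + b * e y2 \<omega>"
      using emb by (simp add: dense_L2_embedding_def)
    then show ?thesis by (elim allE)
  qed
  then show ?thesis by simp
qed

lemma emb_zero: "AE \<omega> in M. e 0 \<omega> = 0"
  using emb_diff[of 0 0] by simp

lemma emb_bound: "\<exists>C\<ge>0. \<forall>y. L2norm M (e y) \<le> C * norm y"
proof -
  have "\<exists>C. \<forall>y. L2norm M (e y) \<le> C * norm y"
    using emb by (simp add: dense_L2_embedding_def)
  then obtain C where C: "\<And>y. L2norm M (e y) \<le> C * norm y"
    by blast
  have "L2norm M (e y) \<le> max C 0 * norm y" for y
    using C[of y] mult_right_mono[OF max.cobounded1[of C 0] norm_ge_zero[of y]] by linarith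
  then show ?thesis by (intro exI[of _ "max C 0"]) auto
qed

lemma emb_Q_diff: "Q M (\<lambda>\<omega>. e y1 \<omega> - e y2 \<omega>) = Q M (e (y1 - y2))"
proof -
  have [measurable]: "e y1 \<in> borel_measurable M" "e y2 \<in> borel_measurable M" "e (y1 - y2) \<in> borel_measurable M"
    by (rule L2_meas[OF emb_L2])+
  show ?thesis
    unfolding Q_def using emb_diff[of y1 y2] by (intro integral_cong_AE) (auto elim!: eventually_mono)
qed

lemma emb_L2norm_diff: "L2norm M (\<lambda>\<omega>. e y1 \<omega> - e y2 \<omega>) = L2norm M (e (y1 - y2))"
  by (simp add: L2norm_Q emb_Q_diff)

end



theorem theorem6p3:
  fixes M :: "'w measure"
    and e :: "'y::banach \<Rightarrow> ('w \<Rightarrow> real)"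
    and f :: "'x::banach \<Rightarrow> real" and f' :: "'x \<Rightarrow> ('x \<Rightarrow>\<^sub>L real)"
    and g :: "'x \<Rightarrow> 'y" and g' :: "'x \<Rightarrow> ('x \<Rightarrow>\<^sub>L 'y)"
    and x :: "nat \<Rightarrow> 'x" and lam :: "nat \<Rightarrow> ('w \<Rightarrow> real)" and w :: "nat \<Rightarrow> ('w \<Rightarrow> real)"
    and \<rho> :: "nat \<Rightarrow> real" and wmax :: "'w \<Rightarrow> real" and \<gamma> \<tau> :: real
    and xbar :: 'x
  assumes emb: "dense_L2_embedding M e"
    and f_C1: "C1_Frechet f f'"
    and g_C1: "C1_Frechet g g'"
    \<comment> \<open>(S.0)\<close>
    and lam0: "lam 0 \<in> L2 M"
    and rho0: "\<rho> 0 > 0"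
    and wmax_L2: "wmax \<in> L2 M" and wmax_nonneg: "AE \<omega> in M. wmax \<omega> \<ge> 0"
    and gamma: "\<gamma> > 1" and tau: "0 < \<tau>" "\<tau> < 1"
    \<comment> \<open>(S.2)\<close>
    and w_L2: "\<And>k. w k \<in> L2 M"
    and w_bounds: "\<And>k. AE \<omega> in M. 0 \<le> w k \<omega> \<and> w k \<omega> \<le> wmax \<omega>"
    and stationarity: "(\<lambda>k. onorm (AL_deriv M e f' g g' (\<rho> k) (x (Suc k)) (w k))) \<longlonglongrightarrow> 0"
    \<comment> \<open>(S.3)\<close>
    and lam_update: "\<And>k. lam (Suc k) = (\<lambda>\<omega>. max (w k \<omega> + \<rho> k * e (g (x (Suc k))) \<omega>) 0)"
    and rho_update: "\<And>k. \<rho> (Suc k) =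
        (if k = 0 \<or>
            L2norm M (\<lambda>\<omega>. min (- e (g (x (Suc k))) \<omega>) (w k \<omega> / \<rho> k))
              \<le> \<tau> * L2norm M (\<lambda>\<omega>. min (- e (g (x k)) \<omega>) (w (k - 1) \<omega> / \<rho> (k - 1)))
         then \<rho> k else \<gamma> * \<rho> k)"
    \<comment> \<open>bounded penalty parameters\<close>
    and rho_bdd: "bdd_above (range \<rho>)"
    \<comment> \<open>xbar is a (strong) limit point of (x^k)\<close>
    and limpt: "\<exists>s. strict_mono s \<and> (x \<circ> s) \<longlonglongrightarrow> xbar"
  shows "\<exists>\<mu>. \<mu> \<in> L2 M \<and> (AE \<omega> in M. \<mu> \<omega> \<ge> 0)
           \<and> (\<forall>d. blinfun_apply (f' xbar) d + L2inner M \<mu> (e (blinfun_apply (g' xbar) d)) = 0)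
           \<and> (AE \<omega> in M. e (g xbar) \<omega> \<le> 0)
           \<and> L2inner M \<mu> (e (g xbar)) = 0"
proof -
  obtain C where C0: "C \<ge> 0" and Cb: "\<And>y. L2norm M (e y) \<le> C * norm y"
    using emb_bound[OF emb] by blast
  have eL2: "\<And>y. e y \<in> L2 M" using emb_L2[OF emb] .
  have ediffn: "L2norm M (\<lambda>\<omega>. e y1 \<omega> - e y2 \<omega>) \<le> C * norm (y1 - y2)" for y1 y2
    using emb_L2norm_diff[OF emb, of y1 y2] Cb[of "y1 - y2"] by simp
  have eQdiff: "Q M (\<lambda>\<omega>. e y1 \<omega> - e y2 \<omega>) \<le> (C * norm (y1 - y2))\<^sup>2" for y1 y2
  proof -
    have "(L2norm M (\<lambda>\<omega>. e y1 \<omega> - e y2 \<omega>))\<^sup>2 \<le> (C * norm (y1 - y2))\<^sup>2"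
      by (rule power_mono[OF ediffn L2norm_nonneg])
    then show ?thesis by (simp add: L2norm_sq)
  qed
  have inner_e: "\<bar>L2inner M u (e y1) - L2inner M u (e y2)\<bar> \<le> L2norm M u * (C * norm (y1 - y2))"
    if u: "u \<in> L2 M" for u y1 y2
  proof -
    have "L2inner M u (e y1) - L2inner M u (e y2) = L2inner M u (\<lambda>\<omega>. e y1 \<omega> - e y2 \<omega>)"
      using L2inner_diff2[OF eL2 eL2 u] by simp
    also have "\<bar>\<dots>\<bar> \<le> L2norm M u * L2norm M (\<lambda>\<omega>. e y1 \<omega> - e y2 \<omega>)"
      by (rule L2_CS[OF u L2_diff[OF eL2 eL2]])
    also have "\<dots> \<le> L2norm M u * (C * norm (y1 - y2))"
      by (rule mult_left_mono[OF ediffn L2norm_nonneg])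
    finally show ?thesis .
  qed
  have L2_div: "(\<lambda>\<omega>. u \<omega> / c) \<in> L2 M" if "u \<in> L2 M" for u and c :: real
    using L2_cmult[OF that, of "1/c"] by simp

  have step: "\<rho> (Suc k) = \<rho> k \<or> \<rho> (Suc k) = \<gamma> * \<rho> k" for k
    using rho_update[of k] by (auto split: if_splits)
  have rpos: "\<rho> k > 0" for k by (rule rho_pos_mono(1)[OF rho0 gamma step])
  obtain R where R: "\<And>k. \<rho> k \<le> R" using rho_bdd by (auto simp: bdd_above_def)
  have R0: "R \<ge> 0" using R[of 0] rpos[of 0] by simp
  obtain K where K: "\<And>k. k \<ge> K \<Longrightarrow> \<rho> (Suc k) = \<rho> k"
    using rho_eventually_const[OF rho0 gamma step rho_bdd] by blast
  define mm where "mm k = L2norm M (\<lambda>\<omega>. min (- e (g (x (Suc k))) \<omega>) (w k \<omega> / \<rho> k))" for k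
  have mm_dec: "mm (Suc k) \<le> \<tau> * mm k" if "k \<ge> K" for k
  proof -
    have h: "\<rho> (Suc (Suc k)) = \<rho> (Suc k)" using K[of "Suc k"] that by simp
    have ne: "\<gamma> * \<rho> (Suc k) \<noteq> \<rho> (Suc k)" using gamma rpos[of "Suc k"] by simp
    show ?thesis using rho_update[of "Suc k"] h ne unfolding mm_def by (auto split: if_splits)
  qed
  have mm_lim: "mm \<longlonglongrightarrow> 0"
    by (rule geo_tendsto[where m=mm and K=K and \<tau>=\<tau>, OF mm_dec]) (use tau in \<open>auto simp: mm_def L2norm_nonneg\<close>)

  obtain s where s: "strict_mono s" "(x \<circ> s) \<longlonglongrightarrow> xbar" using limpt by blast
  define j where "j k = s (Suc k) - 1" for k
  have sj: "Suc (j k) = s (Suc k)" for k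
  proof -
    have "Suc k \<le> s (Suc k)" using strict_mono_imp_increasing[OF s(1)] .
    then show ?thesis by (simp add: j_def)
  qed
  have jmono: "strict_mono j"
  proof (rule strict_mono_Suc_iff[THEN iffD2], intro allI)
    fix k
    have "s (Suc k) < s (Suc (Suc k))" using s(1) by (simp add: strict_mono_Suc_iff)
    then show "j k < j (Suc k)" using sj[of k] sj[of "Suc k"] by simp
  qed
  define xs where "xs k = x (Suc (j k))" for k
  have xs_eq: "xs = (\<lambda>k. (x \<circ> s) (Suc k))" by (rule ext) (simp add: xs_def sj)
  have xs_lim: "xs \<longlonglongrightarrow> xbar" unfolding xs_eq by (rule LIMSEQ_Suc[OF s(2)])
  have g_cont: "isCont g z" for z
    using g_C1 unfolding C1_Frechet_def by (blast intro: has_derivative_continuous)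
  have f'_cont: "isCont f' z" for z
    using f_C1 unfolding C1_Frechet_def by (simp add: continuous_on_eq_continuous_at)
  have g'_cont: "isCont g' z" for z
    using g_C1 unfolding C1_Frechet_def by (simp add: continuous_on_eq_continuous_at)
  have gxs: "(\<lambda>k. g (xs k)) \<longlonglongrightarrow> g xbar" by (rule isCont_tendsto_compose[OF g_cont xs_lim])
  have f'xs: "(\<lambda>k. f' (xs k)) \<longlonglongrightarrow> f' xbar" by (rule isCont_tendsto_compose[OF f'_cont xs_lim])
  have g'xs: "(\<lambda>k. g' (xs k)) \<longlonglongrightarrow> g' xbar" by (rule isCont_tendsto_compose[OF g'_cont xs_lim])
  have gdiff0: "(\<lambda>k. norm (g xbar - g (xs k))) \<longlonglongrightarrow> 0"
  proof -
    have "(\<lambda>k. g (xs k) - g xbar) \<longlonglongrightarrow> 0" using gxs by (simp add: LIM_zero_iff)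
    then have "(\<lambda>k. norm (g (xs k) - g xbar)) \<longlonglongrightarrow> 0" by (rule tendsto_norm_zero)
    then show ?thesis by (simp add: norm_minus_commute)
  qed
  obtain NB where NB: "NB > 0" "\<And>k. norm (g (xs k)) \<le> NB"
    using convergent_imp_Bseq[OF convergentI[OF gxs]] by (auto elim!: BseqE)

  define uk where "uk k = (\<lambda>\<omega>. max (w (j k) \<omega> + \<rho> (j k) * e (g (xs k)) \<omega>) 0)" for k
  have uk_L2: "uk k \<in> L2 M" for k
    unfolding uk_def by (intro L2_max0 L2_add w_L2 L2_cmult eL2)
  have uk_nn: "AE \<omega> in M. uk k \<omega> \<ge> 0" for k by (simp add: uk_def)
  define Bd where "Bd = 2 * Q M wmax + 2 * R\<^sup>2 * (C * NB)\<^sup>2"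
  have uk_Q: "Q M (uk k) \<le> Bd" for k
  proof -
    have "Q M (uk k) \<le> (\<integral>\<omega>. 2 * (wmax \<omega>)\<^sup>2 + 2 * R\<^sup>2 * (e (g (xs k)) \<omega>)\<^sup>2 \<partial>M)"
      unfolding Q_def
    proof (rule integral_mono_AE)
      show "integrable M (\<lambda>\<omega>. (uk k \<omega>)\<^sup>2)" by (rule L2_sq_int[OF uk_L2])
      show "integrable M (\<lambda>\<omega>. 2 * (wmax \<omega>)\<^sup>2 + 2 * R\<^sup>2 * (e (g (xs k)) \<omega>)\<^sup>2)"
        using L2_sq_int[OF wmax_L2] L2_sq_int[OF eL2] by simp
      show "AE \<omega> in M. (uk k \<omega>)\<^sup>2 \<le> 2 * (wmax \<omega>)\<^sup>2 + 2 * R\<^sup>2 * (e (g (xs k)) \<omega>)\<^sup>2"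
        using w_bounds[of "j k"]
      proof eventually_elim
        case (elim \<omega>)
        show ?case unfolding uk_def
          by (rule pw1) (use elim rpos[of "j k"] R[of "j k"] in auto)
      qed
    qed
    also have "\<dots> = 2 * Q M wmax + 2 * R\<^sup>2 * Q M (e (g (xs k)))"
      unfolding Q_def using L2_sq_int[OF wmax_L2] L2_sq_int[OF eL2] by simp
    also have "Q M (e (g (xs k))) \<le> (C * NB)\<^sup>2"
    proof -
      have "L2norm M (e (g (xs k))) \<le> C * NB"
        using Cb[of "g (xs k)"] mult_left_mono[OF NB(2)[of k] C0] by linarith
      then have "(L2norm M (e (g (xs k))))\<^sup>2 \<le> (C * NB)\<^sup>2"
        by (rule power_mono[OF _ L2norm_nonneg])
      then show ?thesis by (simp add: L2norm_sq)
    qed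
    then have "2 * Q M wmax + 2 * R\<^sup>2 * Q M (e (g (xs k))) \<le> Bd"
      unfolding Bd_def by (simp add: mult_left_mono)
    finally show ?thesis .
  qed
  have Bd0: "Bd \<ge> 0" using uk_Q[of 0] Q_nonneg[of M "uk 0"] by simp
  have uk_norm: "L2norm M (uk k) \<le> sqrt Bd" for k
    using uk_Q[of k] by (simp add: L2norm_Q)

  define A where "A k = AL_deriv M e f' g g' (\<rho> (j k)) (x (Suc (j k))) (w (j k))" for k
  have A_eq: "A k d = blinfun_apply (f' (xs k)) d + L2inner M (uk k) (e (blinfun_apply (g' (xs k)) d))" for k d
    by (simp add: A_def AL_deriv_def uk_def xs_def)
  have A_on: "(\<lambda>k. onorm (A k)) \<longlonglongrightarrow> 0"
    using LIMSEQ_subseq_LIMSEQ[OF stationarity jmono] by (simp add: o_def A_def)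
  have A_bound: "\<bar>A k d\<bar> \<le> onorm (A k) * norm d" for k d
  proof (rule onorm_apply_bound)
    fix d
    have "\<bar>blinfun_apply (f' (xs k)) d\<bar> \<le> norm (f' (xs k)) * norm d"
      using norm_blinfun[of "f' (xs k)" d] by simp
    moreover have "\<bar>L2inner M (uk k) (e (blinfun_apply (g' (xs k)) d))\<bar>
        \<le> L2norm M (uk k) * (C * (norm (g' (xs k)) * norm d))"
    proof -
      have "\<bar>L2inner M (uk k) (e (blinfun_apply (g' (xs k)) d))\<bar>
          \<le> L2norm M (uk k) * L2norm M (e (blinfun_apply (g' (xs k)) d))"
        by (rule L2_CS[OF uk_L2 eL2])
      also have "\<dots> \<le> L2norm M (uk k) * (C * norm (blinfun_apply (g' (xs k)) d))"
        by (rule mult_left_mono[OF Cb L2norm_nonneg])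
      also have "\<dots> \<le> L2norm M (uk k) * (C * (norm (g' (xs k)) * norm d))"
        by (intro mult_left_mono[OF _ L2norm_nonneg] mult_left_mono[OF norm_blinfun C0])
      finally show ?thesis .
    qed
    ultimately show "\<bar>A k d\<bar> \<le> (norm (f' (xs k)) + L2norm M (uk k) * C * norm (g' (xs k))) * norm d"
      unfolding A_eq by (simp add: algebra_simps)
  qed
  have lim_d: "(\<lambda>k. L2inner M (uk k) (e (blinfun_apply (g' xbar) d))) \<longlonglongrightarrow> - blinfun_apply (f' xbar) d" for d
  proof -
    have t1: "(\<lambda>k. A k d) \<longlonglongrightarrow> 0"
    proof (rule Lim_null_comparison)
      show "\<forall>\<^sub>F k in sequentially. norm (A k d) \<le> onorm (A k) * norm d"
        using A_bound by (intro always_eventually allI) simp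
      show "(\<lambda>k. onorm (A k) * norm d) \<longlonglongrightarrow> 0" by (rule tendsto_mult_left_zero[OF A_on])
    qed
    have t2: "(\<lambda>k. blinfun_apply (f' (xs k)) d) \<longlonglongrightarrow> blinfun_apply (f' xbar) d"
      by (rule blinfun.tendsto[OF f'xs tendsto_const])
    have t3: "(\<lambda>k. L2inner M (uk k) (e (blinfun_apply (g' (xs k)) d)) - L2inner M (uk k) (e (blinfun_apply (g' xbar) d))) \<longlonglongrightarrow> 0"
    proof (rule Lim_null_comparison)
      show "\<forall>\<^sub>F k in sequentially. norm (L2inner M (uk k) (e (blinfun_apply (g' (xs k)) d)) - L2inner M (uk k) (e (blinfun_apply (g' xbar) d)))
          \<le> sqrt Bd * (C * norm (blinfun_apply (g' (xs k)) d - blinfun_apply (g' xbar) d))"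
      proof (intro always_eventually allI)
        fix k
        have "\<bar>L2inner M (uk k) (e (blinfun_apply (g' (xs k)) d)) - L2inner M (uk k) (e (blinfun_apply (g' xbar) d))\<bar>
            \<le> L2norm M (uk k) * (C * norm (blinfun_apply (g' (xs k)) d - blinfun_apply (g' xbar) d))"
          by (rule inner_e[OF uk_L2])
        also have "\<dots> \<le> sqrt Bd * (C * norm (blinfun_apply (g' (xs k)) d - blinfun_apply (g' xbar) d))"
          by (rule mult_right_mono[OF uk_norm]) (simp add: C0)
        finally show "norm (L2inner M (uk k) (e (blinfun_apply (g' (xs k)) d)) - L2inner M (uk k) (e (blinfun_apply (g' xbar) d)))
          \<le> sqrt Bd * (C * norm (blinfun_apply (g' (xs k)) d - blinfun_apply (g' xbar) d))" by simp
      qed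
      have "(\<lambda>k. blinfun_apply (g' (xs k)) d) \<longlonglongrightarrow> blinfun_apply (g' xbar) d"
        by (rule blinfun.tendsto[OF g'xs tendsto_const])
      then have "(\<lambda>k. blinfun_apply (g' (xs k)) d - blinfun_apply (g' xbar) d) \<longlonglongrightarrow> 0"
        by (simp add: LIM_zero_iff)
      then have "(\<lambda>k. norm (blinfun_apply (g' (xs k)) d - blinfun_apply (g' xbar) d)) \<longlonglongrightarrow> 0"
        by (rule tendsto_norm_zero)
      then show "(\<lambda>k. sqrt Bd * (C * norm (blinfun_apply (g' (xs k)) d - blinfun_apply (g' xbar) d))) \<longlonglongrightarrow> 0"
        by (intro tendsto_mult_right_zero)
    qed
    have "(\<lambda>k. A k d - blinfun_apply (f' (xs k)) d
        - (L2inner M (uk k) (e (blinfun_apply (g' (xs k)) d)) - L2inner M (uk k) (e (blinfun_apply (g' xbar) d))))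
        \<longlonglongrightarrow> 0 - blinfun_apply (f' xbar) d - 0"
      by (intro tendsto_diff t1 t2 t3)
    then show ?thesis by (simp add: A_eq)
  qed

  define mn where "mn k = (\<lambda>\<omega>. min (- e (g (xs k)) \<omega>) (w (j k) \<omega> / \<rho> (j k)))" for k
  have mn_L2: "mn k \<in> L2 M" for k
    unfolding mn_def by (intro L2_min L2_uminus eL2 L2_div w_L2)
  have mn_norm: "L2norm M (mn k) = mm (j k)" for k
    by (simp add: mn_def mm_def xs_def)
  have mmj: "(\<lambda>k. mm (j k)) \<longlonglongrightarrow> 0"
    using LIMSEQ_subseq_LIMSEQ[OF mm_lim jmono] by (simp add: o_def)
  have pos_k: "Q M (\<lambda>\<omega>. max (e (g (xs k)) \<omega>) 0) \<le> (mm (j k))\<^sup>2" for k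
  proof -
    note [measurable] = L2_meas[OF eL2]
    have "Q M (\<lambda>\<omega>. max (e (g (xs k)) \<omega>) 0) \<le> Q M (mn k)"
    proof (rule L2_bound(2)[OF mn_L2])
      show "(\<lambda>\<omega>. max (e (g (xs k)) \<omega>) 0) \<in> borel_measurable M" by measurable
      show "AE \<omega> in M. \<bar>max (e (g (xs k)) \<omega>) 0\<bar> \<le> \<bar>mn k \<omega>\<bar>"
        using w_bounds[of "j k"] by eventually_elim (simp add: mn_def pw2 rpos)
    qed
    then show ?thesis by (simp add: L2norm_sq[symmetric] mn_norm)
  qed
  have feas: "AE \<omega> in M. e (g xbar) \<omega> \<le> 0"
  proof -
    note [measurable] = L2_meas[OF eL2]
    have bnd: "Q M (\<lambda>\<omega>. max (e (g xbar) \<omega>) 0) \<le> 2 * (mm (j k))\<^sup>2 + 2 * (C * norm (g xbar - g (xs k)))\<^sup>2" for k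
    proof -
      have "Q M (\<lambda>\<omega>. max (e (g xbar) \<omega>) 0)
          \<le> 2 * Q M (\<lambda>\<omega>. max (e (g (xs k)) \<omega>) 0) + 2 * Q M (\<lambda>\<omega>. e (g xbar) \<omega> - e (g (xs k)) \<omega>)"
        by (rule Q_tri2) (auto intro!: L2_max0 L2_diff eL2)
      then show ?thesis using pos_k[of k] eQdiff[of "g xbar" "g (xs k)"] by linarith
    qed
    have "(\<lambda>k. 2 * (mm (j k))\<^sup>2 + 2 * (C * norm (g xbar - g (xs k)))\<^sup>2) \<longlonglongrightarrow> 2 * 0\<^sup>2 + 2 * (C * 0)\<^sup>2"
      by (intro tendsto_intros mmj gdiff0)
    then have "Q M (\<lambda>\<omega>. max (e (g xbar) \<omega>) 0) \<le> 0"
      by (intro LIMSEQ_le_const[where X="\<lambda>k. 2 * (mm (j k))\<^sup>2 + 2 * (C * norm (g xbar - g (xs k)))\<^sup>2"])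
         (use bnd in auto)
    then have "Q M (\<lambda>\<omega>. max (e (g xbar) \<omega>) 0) = 0" using Q_nonneg by (metis order_antisym)
    then have "AE \<omega> in M. (max (e (g xbar) \<omega>) 0)\<^sup>2 = 0"
      unfolding Q_def using L2_sq_int[OF L2_max0[OF eL2]]
      by (subst (asm) integral_nonneg_eq_0_iff_AE) auto
    then show ?thesis by eventually_elim (simp add: max_def split: if_splits)
  qed

  have compl: "(\<lambda>k. L2inner M (uk k) (e (g xbar))) \<longlonglongrightarrow> 0"
  proof (rule Lim_null_comparison)
    show "\<forall>\<^sub>F k in sequentially. norm (L2inner M (uk k) (e (g xbar)))
        \<le> sqrt Bd * mm (j k) + sqrt Bd * (C * norm (g xbar - g (xs k)))"
    proof (intro always_eventually allI)
      fix k
      note [measurable] = L2_meas[OF eL2] L2_meas[OF uk_L2] L2_meas[OF mn_L2]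
      have c1: "\<bar>L2inner M (uk k) (e (g (xs k)))\<bar> \<le> sqrt Bd * mm (j k)"
      proof -
        have "\<bar>L2inner M (uk k) (e (g (xs k)))\<bar> \<le> (\<integral>\<omega>. \<bar>uk k \<omega> * e (g (xs k)) \<omega>\<bar> \<partial>M)"
          unfolding L2inner_def by (rule integral_abs_bound)
        also have "\<dots> \<le> (\<integral>\<omega>. uk k \<omega> * \<bar>mn k \<omega>\<bar> \<partial>M)"
        proof (rule integral_mono_AE)
          show "integrable M (\<lambda>\<omega>. \<bar>uk k \<omega> * e (g (xs k)) \<omega>\<bar>)"
            using L2_prod_int[OF uk_L2 eL2] by simp
          show "integrable M (\<lambda>\<omega>. uk k \<omega> * \<bar>mn k \<omega>\<bar>)"
            by (rule L2_prod_int[OF uk_L2 L2_abs[OF mn_L2]])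
          show "AE \<omega> in M. \<bar>uk k \<omega> * e (g (xs k)) \<omega>\<bar> \<le> uk k \<omega> * \<bar>mn k \<omega>\<bar>"
            using w_bounds[of "j k"] by eventually_elim (simp add: uk_def mn_def pw3 rpos)
        qed
        also have "\<dots> = L2inner M (uk k) (\<lambda>\<omega>. \<bar>mn k \<omega>\<bar>)" by (simp add: L2inner_def)
        also have "\<dots> \<le> L2norm M (uk k) * L2norm M (\<lambda>\<omega>. \<bar>mn k \<omega>\<bar>)"
          using L2_CS[OF uk_L2[of k] L2_abs[OF mn_L2[of k]]] by linarith
        also have "L2norm M (\<lambda>\<omega>. \<bar>mn k \<omega>\<bar>) = mm (j k)"
          using mn_norm[of k] by (simp add: L2norm_def)
        also have "L2norm M (uk k) * mm (j k) \<le> sqrt Bd * mm (j k)"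
          by (rule mult_right_mono[OF uk_norm]) (simp add: mm_def L2norm_nonneg)
        finally show ?thesis .
      qed
      have c2: "\<bar>L2inner M (uk k) (e (g xbar)) - L2inner M (uk k) (e (g (xs k)))\<bar>
          \<le> sqrt Bd * (C * norm (g xbar - g (xs k)))"
        using inner_e[OF uk_L2, of k "g xbar" "g (xs k)"]
          mult_right_mono[OF uk_norm[of k], of "C * norm (g xbar - g (xs k))"] C0 by simp
      show "norm (L2inner M (uk k) (e (g xbar))) \<le> sqrt Bd * mm (j k) + sqrt Bd * (C * norm (g xbar - g (xs k)))"
        using c1 c2 by simp
    qed
    have "(\<lambda>k. sqrt Bd * mm (j k) + sqrt Bd * (C * norm (g xbar - g (xs k)))) \<longlonglongrightarrow> sqrt Bd * 0 + sqrt Bd * (C * 0)"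
      by (intro tendsto_intros mmj gdiff0)
    then show "(\<lambda>k. sqrt Bd * mm (j k) + sqrt Bd * (C * norm (g xbar - g (xs k)))) \<longlonglongrightarrow> 0" by simp
  qed

  obtain \<mu> where \<mu>: "\<mu> \<in> L2 M" "AE \<omega> in M. \<mu> \<omega> \<ge> 0"
    and wk: "\<And>a l. a \<in> L2 M \<Longrightarrow> (\<lambda>k. L2inner M (uk k) a) \<longlonglongrightarrow> l \<Longrightarrow> L2inner M \<mu> a = l"
    using L2_weak_limit[where u=uk and M=M and B=Bd, OF uk_L2 uk_nn uk_Q] by blast
  have "\<forall>d. blinfun_apply (f' xbar) d + L2inner M \<mu> (e (blinfun_apply (g' xbar) d)) = 0"
    using wk[OF eL2 lim_d] by simp
  moreover have "L2inner M \<mu> (e (g xbar)) = 0" by (rule wk[OF eL2 compl])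
  ultimately show ?thesis using \<mu> feas by blast
qed


end
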